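(* Let $b>1$ be an integer and let $H$ be a generalized $b$-happy function with digit mean $\mu$ and digit standard deviation $\sigma$. Let $n$ be a positive integer with $4\mid n$ and let $C\subseteq\mathbb{Z}_{\ge 0}$. Given $\lambda>0$, let $$J_{n,\lambda}=\left[1+\tfrac34 n\mu+\lambda\sigma\sqrt{\tfrac34 n},\ \tfrac14 n+\tfrac34 n\mu-\lambda\sigma\sqrt{\tfrac34 n}\right].$$ Suppose there is a nonempty integer interval $I\subseteq J_{n,\lambda}$ with type-$C$ density $d$. Then there exists an $n$-strict interval $I_2$ whose type-$C$ density is at least $$\left(1-\frac{1}{\lambda^2}\right)\frac{d}{1+\frac{\sqrt{3n}\,\sigma\lambda}{|I|}}.$$
   Context: A generalized $b$-happy function: fix an integer $b>1$ and non-negative integers $h(0),\dots,h(b-1)$ with $h(0)=0$, $h(1)=1$; for $n=\sum_{i=0}^k a_ib^i$ in base $b$, $H(n)=\sum_{i=0}^k h(a_i)$. Digit mean $\mu=\frac1b\sum_{j=0}^{b-1}h(j)$, digit variance $\sigma^2=\frac1b\sum_{j=0}^{b-1}(h(j)-\mu)^2$. For $C\subseteq\mathbb{Z}_{\ge0}$, an integer $n$ is type-$C$ if $H^k(n)\in C$ for some integer $k\ge0$. An integer interval $[a,c]$ ($a,c$ real) is the set of integers $x$ with $a\le x\le c$; $|I|$ is its cardinality. The type-$C$ density of a finite nonempty integer interval $I$ is $|\{n\in I:n\text{ type-}C\}|/|I|$. An integer interval $I$ is $n$-strict if $I\subseteq[b^{n-1},b^n-1]$ and $|I|=b^{3n/4}$.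 *)

theory Defs
  imports "HOL-Analysis.Analysis"
begin

text \<open>Digit function h of a generalized b-happy function: values h 0, ..., h (b-1)
  are non-negative integers with h 0 = 0 and h 1 = 1 (values at j >= b are irrelevant).\<close>
definition gen_happy_digits :: "nat \<Rightarrow> (nat \<Rightarrow> nat) \<Rightarrow> bool" where
  "gen_happy_digits b h \<longleftrightarrow> b > 1 \<and> h 0 = 0 \<and> h 1 = 1"

function happyH :: "nat \<Rightarrow> (nat \<Rightarrow> nat) \<Rightarrow> nat \<Rightarrow> nat" where
  "happyH b h n = (if n = 0 \<or> b \<le> 1 then 0 else h (n mod b) + happyH b h (n div b))"
  by auto
termination
  by (relation "Wellfounded.measure (\<lambda>(b, h, n). n)") auto

definition digit_mean :: "nat \<Rightarrow> (nat \<Rightarrow> nat) \<Rightarrow> real" where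
  "digit_mean b h = (1 / real b) * (\<Sum>j<b. real (h j))"

definition digit_sd :: "nat \<Rightarrow> (nat \<Rightarrow> nat) \<Rightarrow> real" where
  "digit_sd b h = sqrt ((1 / real b) * (\<Sum>j<b. (real (h j) - digit_mean b h)^2))"

definition typeC :: "nat \<Rightarrow> (nat \<Rightarrow> nat) \<Rightarrow> nat set \<Rightarrow> nat \<Rightarrow> bool" where
  "typeC b h C m \<longleftrightarrow> (\<exists>k. (happyH b h ^^ k) m \<in> C)"

text \<open>Nonempty integer intervals (all relevant ones consist of non-negative integers).\<close>
definition int_interval :: "nat set \<Rightarrow> bool" where
  "int_interval I \<longleftrightarrow> (\<exists>a c. a \<le> c \<and> I = {a..c})"

definition typeC_density :: "nat \<Rightarrow> (nat \<Rightarrow> nat) \<Rightarrow> nat set \<Rightarrow> nat set \<Rightarrow> real" where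
  "typeC_density b h C I = real (card {m \<in> I. typeC b h C m}) / real (card I)"

definition n_strict :: "nat \<Rightarrow> nat \<Rightarrow> nat set \<Rightarrow> bool" where
  "n_strict b n I \<longleftrightarrow> int_interval I \<and> I \<subseteq> {b^(n-1) .. b^n - 1}
     \<and> real (card I) = real b powr (3 * real n / 4)"

definition J_interval :: "nat \<Rightarrow> (nat \<Rightarrow> nat) \<Rightarrow> nat \<Rightarrow> real \<Rightarrow> nat set" where
  "J_interval b h n lam = {x. 1 + 3/4 * real n * digit_mean b h + lam * digit_sd b h * sqrt (3/4 * real n) \<le> real x
      \<and> real x \<le> 1/4 * real n + 3/4 * real n * digit_mean b h - lam * digit_sd b h * sqrt (3/4 * real n)}"

end

theory Submission
  imports Defs
begin
declare happyH.simps[simp del]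

lemma H_zero: "happyH b h 0 = 0"
  by (subst happyH.simps) simp

lemma H_digit:
  assumes "b > 1" "h 0 = 0" "d < b"
  shows "happyH b h (d + b*y) = h d + happyH b h y"
proof (cases "d + b*y = 0")
  case True
  then have "d = 0" "y = 0" using assms by auto
  then show ?thesis using assms by (simp add: H_zero)
next
  case False
  have "happyH b h (d+b*y) = h ((d+b*y) mod b) + happyH b h ((d+b*y) div b)"
    by (subst happyH.simps) (use False assms in auto)
  moreover have "(d+b*y) mod b = d" "(d+b*y) div b = y" using assms by auto
  ultimately show ?thesis by simp
qed

lemma H_shift:
  assumes "b > 1" "h 0 = 0" "y < b^j"
  shows "happyH b h (x*b^j + y) = happyH b h x + happyH b h y"
  using assms(3)
proof (induction j arbitrary: y)
  case 0
  then show ?case by (simp add: H_zero)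
next
  case (Suc j)
  define d where "d = y mod b"
  define y' where "y' = y div b"
  have yd: "y = d + b*y'" unfolding d_def y'_def by simp
  have db: "d < b" unfolding d_def using assms by auto
  have y'lt: "y' < b^j" unfolding y'_def using Suc.prems
    by (simp add: less_mult_imp_div_less mult.commute)
  have "x*b^Suc j + y = d + b*(x*b^j + y')" using yd by (simp add: algebra_simps)
  then have "happyH b h (x*b^Suc j + y) = h d + happyH b h (x*b^j + y')"
    using H_digit[of b h d, OF assms(1,2) db] by simp
  also have "\<dots> = h d + happyH b h x + happyH b h y'" using Suc.IH[OF y'lt] by simp
  finally show ?case using H_digit[of b h d y', OF assms(1,2) db] yd by simp
qed

fun ones :: "nat \<Rightarrow> nat \<Rightarrow> nat" where
  "ones b 0 = 0" | "ones b (Suc k) = 1 + b * ones b k"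

lemma H_ones:
  assumes "b > 1" "h 0 = 0" "h 1 = 1"
  shows "happyH b h (ones b k) = k"
proof (induction k)
  case 0 then show ?case by (simp add: H_zero)
next
  case (Suc k)
  then show ?case using H_digit[of b h 1 "ones b k", OF assms(1,2)] assms by simp
qed

lemma ones_upper: assumes "b > 1" shows "ones b k < b^k"
proof (induction k)
  case 0 then show ?case by simp
next
  case (Suc k)
  then have "ones b k + 1 \<le> b^k" by simp
  then have "b * (ones b k + 1) \<le> b * b^k" by (rule mult_le_mono2)
  then have "b * ones b k + b \<le> b^Suc k" by (simp add: algebra_simps)
  then show ?case using assms by simp
qed

lemma ones_lower: assumes "b > 1" "k \<ge> 1" shows "b^(k-1) \<le> ones b k"
  using assms(2)
proof (induction k)
  case 0 then show ?case by simp
next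
  case (Suc k)
  show ?case
  proof (cases "k = 0")
    case True then show ?thesis by simp
  next
    case False
    then have "b^(k-1) \<le> ones b k" using Suc by simp
    then have "b * b^(k-1) \<le> b * ones b k" by simp
    moreover have "b * b^(k-1) = b^k" using False by (cases k) auto
    ultimately have "b^k \<le> b * ones b k" by linarith
    then show ?thesis by simp
  qed
qed

lemma sum_split:
  fixes g :: "nat \<Rightarrow> real"
  shows "sum g {..<N*b} = (\<Sum>y<N. \<Sum>d<b. g (d + b*y))"
proof -
  have "sum g {..<N*b} = (\<Sum>y<N. sum g {y*b..<y*b+b})"
    by (rule sum.nat_group[symmetric])
  also have "\<dots> = (\<Sum>y<N. \<Sum>d<b. g (d + b*y))"
  proof (rule sum.cong[OF refl])
    fix y
    have "sum g {0+y*b..<b+y*b} = sum (\<lambda>i. g (i + y*b)) {0..<b}"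
      by (rule sum.shift_bounds_nat_ivl)
    then show "sum g {y*b..<y*b+b} = (\<Sum>d<b. g (d + b*y))"
      by (simp add: atLeast0LessThan add.commute mult.commute)
  qed
  finally show ?thesis .
qed

lemma moments:
  assumes "b > 1" "h 0 = 0"
  shows "(\<Sum>y<b^j. (real (happyH b h y) - real j * digit_mean b h)) = 0 \<and>
         (\<Sum>y<b^j. (real (happyH b h y) - real j * digit_mean b h)^2) = real (b^j) * real j * (digit_sd b h)^2"
proof (induction j)
  case 0 then show ?case by (simp add: H_zero)
next
  case (Suc j)
  define \<mu> where "\<mu> = digit_mean b h"
  define s where "s = (digit_sd b h)^2"
  define u where "u d = real (h d) - \<mu>" for d
  define v where "v y = real (happyH b h y) - real j * \<mu>" for y
  have su: "(\<Sum>d<b. u d) = 0"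
    using assms unfolding u_def \<mu>_def digit_mean_def by (simp add: sum_subtractf)
  have su2: "(\<Sum>d<b. (u d)^2) = real b * s"
  proof -
    have "(1 / real b) * (\<Sum>j<b. (real (h j) - digit_mean b h)^2) \<ge> 0"
      by (intro mult_nonneg_nonneg sum_nonneg) auto
    then show ?thesis unfolding s_def digit_sd_def u_def \<mu>_def using assms by simp
  qed
  have sv: "(\<Sum>y<b^j. v y) = 0" and sv2: "(\<Sum>y<b^j. (v y)^2) = real (b^j) * real j * s"
    using Suc unfolding v_def \<mu>_def s_def by auto
  have key: "real (happyH b h (d + b*y)) - real (Suc j) * \<mu> = u d + v y" if "d < b" for d y
    using H_digit[of b h d y, OF assms that] unfolding u_def v_def by (simp add: algebra_simps)
  have e: "b^Suc j = b^j * b" by simp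
  have "(\<Sum>y<b^Suc j. (real (happyH b h y) - real (Suc j) * \<mu>)) = (\<Sum>y<b^j. \<Sum>d<b. (u d + v y))"
    unfolding e sum_split using key by simp
  also have "\<dots> = (\<Sum>y<b^j. (\<Sum>d<b. u d) + real b * v y)" by (simp add: sum.distrib)
  also have "\<dots> = 0" using su sv by (simp add: sum_distrib_left[symmetric])
  finally have m1: "(\<Sum>y<b^Suc j. (real (happyH b h y) - real (Suc j) * \<mu>)) = 0" .
  have "(\<Sum>y<b^Suc j. (real (happyH b h y) - real (Suc j) * \<mu>)^2) = (\<Sum>y<b^j. \<Sum>d<b. (u d + v y)^2)"
    unfolding e sum_split using key by simp
  also have "\<dots> = (\<Sum>y<b^j. (\<Sum>d<b. (u d)^2) + 2 * v y * (\<Sum>d<b. u d) + real b * (v y)^2)"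
    by (simp add: power2_sum sum.distrib sum_distrib_left sum_distrib_right algebra_simps)
  also have "\<dots> = (\<Sum>y<b^j. real b * s + real b * (v y)^2)" using su su2 by simp
  also have "\<dots> = real (b^j) * (real b * s) + real b * (\<Sum>y<b^j. (v y)^2)"
    by (simp add: sum.distrib sum_distrib_left)
  also have "\<dots> = real (b^Suc j) * real (Suc j) * s" using sv2 by (simp add: algebra_simps)
  finally show ?case using m1 unfolding \<mu>_def s_def by simp
qed


lemma double_count:
  assumes "finite A" "finite B"
  shows "(\<Sum>a\<in>A. card {b\<in>B. P a b}) = (\<Sum>b\<in>B. card {a\<in>A. P a b})"
proof -
  have "(\<Sum>a\<in>A. card {b\<in>B. P a b}) = (\<Sum>a\<in>A. \<Sum>b\<in>B. if P a b then 1 else 0)"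
    using assms by (simp add: sum.inter_filter[symmetric])
  also have "\<dots> = (\<Sum>b\<in>B. \<Sum>a\<in>A. if P a b then 1 else 0)" by (rule sum.swap)
  also have "\<dots> = (\<Sum>b\<in>B. card {a\<in>A. P a b})"
    using assms by (simp add: sum.inter_filter[symmetric])
  finally show ?thesis .
qed

lemma card_real_bound:
  fixes S :: "nat set"
  assumes "finite S" "S \<noteq> {}" "\<And>k. k \<in> S \<Longrightarrow> L \<le> real k \<and> real k \<le> U"
  shows "real (card S) \<le> U - L + 1"
proof -
  have "S \<subseteq> {Min S..Max S}" using assms by auto
  then have "card S \<le> card {Min S..Max S}" by (rule card_mono[rotated]) simp
  then have c: "card S \<le> Suc (Max S) - Min S" by simp
  have "Min S \<le> Max S" using assms by simp
  moreover have "L \<le> real (Min S)" "real (Max S) \<le> U" using assms Min_in Max_in by blast+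
  ultimately show ?thesis using c by linarith
qed

lemma typeC_H:
  assumes "typeC b h C (happyH b h m)" shows "typeC b h C m"
proof -
  obtain k where "(happyH b h ^^ k) (happyH b h m) \<in> C" using assms unfolding typeC_def by blast
  then have "(happyH b h ^^ Suc k) m \<in> C" by (simp add: funpow_Suc_right del: funpow.simps)
  then show ?thesis unfolding typeC_def by blast
qed


theorem theorem3p3:
  fixes b n :: nat and h :: "nat \<Rightarrow> nat" and C :: "nat set" and lam :: real and I :: "nat set"
  assumes "gen_happy_digits b h"
    and "n > 0" and "4 dvd n"
    and "lam > 0"
    and "int_interval I" and "I \<subseteq> J_interval b h n lam"
  shows "\<exists>I2. n_strict b n I2 \<and>
     typeC_density b h C I2 \<ge>
       (1 - 1 / lam^2) * typeC_density b h C I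
         / (1 + sqrt (3 * real n) * digit_sd b h * lam / real (card I))"
proof -
  have b1: "b > 1" and h0: "h 0 = 0" and h1: "h 1 = 1" using assms(1) unfolding gen_happy_digits_def by auto
  define q where "q = n div 4"
  have nq: "n = 4*q" unfolding q_def using assms(3) by auto
  have q1: "q \<ge> 1" using nq assms(2) by simp
  define j where "j = 3*q"
  define B where "B = b^j"
  have B1: "B \<ge> 1" unfolding B_def using b1 by simp
  define \<mu> where "\<mu> = digit_mean b h"
  define \<sigma> where "\<sigma> = digit_sd b h"
  have \<sigma>0: "\<sigma> \<ge> 0" unfolding \<sigma>_def digit_sd_def
    by (intro real_sqrt_ge_zero mult_nonneg_nonneg sum_nonneg) auto
  define M where "M = real j * \<mu>"
  define R where "R = lam * \<sigma> * sqrt (real j)"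
  have R0: "R \<ge> 0" unfolding R_def using \<sigma>0 assms(4) by simp
  obtain a c where ac: "a \<le> c" "I = {a..c}" using assms(5) unfolding int_interval_def by blast
  have cardI: "real (card I) = real c - real a + 1" using ac by (simp add: of_nat_diff)
  have cardI0: "real (card I) > 0" using cardI ac by simp
  have e34: "3/4 * real n = real j" "1/4 * real n = real q" unfolding j_def using nq by simp_all
  have Jt: "1 + M + R \<le> real t \<and> real t \<le> real q + M - R" if "t \<in> I" for t
    using assms(6) that unfolding J_interval_def M_def R_def \<mu>_def \<sigma>_def e34 by (auto simp: algebra_simps)
  define T where "T = {t\<in>I. typeC b h C t}"
  have finT: "finite T" unfolding T_def ac by simp
  have dI: "typeC_density b h C I = real (card T) / real (card I)"
    unfolding typeC_density_def T_def ..
  define xk where "xk k = ones b k * b^(q-k)" for k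
  define I2 where "I2 k = {xk k * B .. xk k * B + B - 1}" for k
  define cnt where "cnt k = card {m\<in>I2 k. typeC b h C m}" for k
  have Hxk: "happyH b h (xk k * B + y) = k + happyH b h y" if "y < B" for k y
  proof -
    have "happyH b h (xk k * B + y) = happyH b h (xk k) + happyH b h y"
      using H_shift[of b h y j "xk k"] b1 h0 that unfolding B_def by simp
    moreover have "happyH b h (xk k) = k"
      using H_shift[of b h 0 "q-k" "ones b k"] b1 h0 H_ones[of b h k] h1
      unfolding xk_def by (simp add: H_zero)
    ultimately show ?thesis by simp
  qed
  have strict: "n_strict b n (I2 k)" "typeC_density b h C (I2 k) = real (cnt k) / real B"
    if "1 \<le> k" "k \<le> q" for k
  proof -
    have cI2: "card (I2 k) = B" unfolding I2_def using B1 by simp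
    have lo: "b^(q-1) \<le> xk k"
    proof -
      have "b^(k-1) * b^(q-k) \<le> xk k" unfolding xk_def using ones_lower[OF b1 that(1)] by simp
      moreover have "b^(k-1) * b^(q-k) = b^(q-1)" using that by (simp add: power_add[symmetric])
      ultimately show ?thesis by simp
    qed
    have hi: "xk k + 1 \<le> b^q"
    proof -
      have "ones b k + 1 \<le> b^k" using ones_upper[OF b1, of k] by simp
      then have "(ones b k + 1) * b^(q-k) \<le> b^k * b^(q-k)" by (rule mult_le_mono1)
      moreover have "b^k * b^(q-k) = b^q" using that by (simp add: power_add[symmetric])
      moreover have "xk k + 1 \<le> (ones b k + 1) * b^(q-k)" unfolding xk_def using b1 by simp
      ultimately show ?thesis by simp
    qed
    have p1: "b^(n-1) = b^(q-1) * B" unfolding B_def j_def nq using q1 by (simp add: power_add[symmetric])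
    have p2: "b^n = b^q * B" unfolding B_def j_def nq by (simp add: power_add[symmetric])
    have "b^(n-1) \<le> xk k * B" unfolding p1 using lo by simp
    moreover have "(xk k + 1) * B \<le> b^n" unfolding p2 using hi by (rule mult_le_mono1)
    ultimately have sub: "I2 k \<subseteq> {b^(n-1) .. b^n - 1}" unfolding I2_def using B1 by (auto simp: algebra_simps)
    have "real b powr (3 * real n / 4) = real b ^ j"
      using b1 e34 powr_realpow[of "real b" j] by (simp add: field_simps)
    then have "real (card (I2 k)) = real b powr (3 * real n / 4)" unfolding cI2 B_def by simp
    moreover have "int_interval (I2 k)" unfolding int_interval_def I2_def using B1 by (intro exI[of _ "xk k * B"] exI[of _ "xk k * B + B - 1"]) auto
    ultimately show "n_strict b n (I2 k)" unfolding n_strict_def using sub by blast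
    show "typeC_density b h C (I2 k) = real (cnt k) / real B"
      unfolding typeC_density_def cnt_def cI2 ..
  qed
  define target where "target = (1 - 1 / lam^2) * typeC_density b h C I
         / (1 + sqrt (3 * real n) * digit_sd b h * lam / real (card I))"
  have sq: "sqrt (3 * real n) = 2 * sqrt (real j)"
  proof -
    have "3 * real n = 2^2 * real j" unfolding j_def nq by simp
    then show ?thesis by (simp add: real_sqrt_mult)
  qed
  have den: "1 + sqrt (3 * real n) * digit_sd b h * lam / real (card I) = (real (card I) + 2*R) / real (card I)"
    unfolding sq R_def \<sigma>_def using cardI0 by (simp add: field_simps)
  have target_eq: "target = (1 - 1/lam^2) * real (card T) / (real (card I) + 2*R)"
  proof -
    have "real (card T) / real (card I) / ((real (card I) + 2*R) / real (card I)) = real (card T) / (real (card I) + 2*R)"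
      using cardI0 R0 by (simp add: field_simps)
    then show ?thesis unfolding target_def den dI by (metis times_divide_eq_right)
  qed
  show ?thesis
  proof (cases "lam > 1 \<and> T \<noteq> {}")
    case False
    have "target \<le> 0"
    proof (cases "T = {}")
      case True then show ?thesis unfolding target_eq by simp
    next
      case F: False
      then have "lam \<le> 1" using False by simp
      then have "lam^2 \<le> 1" using assms(4) by (simp add: power_le_one)
      then have "1/lam^2 \<ge> 1" using assms(4) by (simp add: field_simps)
      then have "1 - 1/lam^2 \<le> 0" by simp
      moreover have "real (card T) / (real (card I) + 2*R) \<ge> 0" using cardI0 R0 by simp
      ultimately show ?thesis unfolding target_eq
        by (metis mult_nonpos_nonneg times_divide_eq_right)
    qed
    moreover have "typeC_density b h C (I2 1) \<ge> 0" unfolding typeC_density_def by simp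
    ultimately show ?thesis using strict(1)[of 1] q1 unfolding target_def by force
  next
    case True
    then have lam1: "lam > 1" and Tne: "T \<noteq> {}" by auto
    define Good where "Good = {y\<in>{..<B}. \<bar>real (happyH b h y) - M\<bar> \<le> R}"
    define Bad where "Bad = {y\<in>{..<B}. \<bar>real (happyH b h y) - M\<bar> > R}"
    have mom: "(\<Sum>y<B. (real (happyH b h y) - M)^2) = real B * real j * \<sigma>^2"
      using moments[of b h j, OF b1 h0] unfolding B_def M_def \<mu>_def \<sigma>_def by simp
    have badb: "real (card Bad) \<le> real B / lam^2"
    proof (cases "\<sigma> = 0")
      case True
      then have "(\<Sum>y<B. (real (happyH b h y) - M)^2) = 0" using mom by simp
      then have "\<forall>y\<in>{..<B}. (real (happyH b h y) - M)^2 = 0"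
        by (subst sum_nonneg_eq_0_iff[symmetric]) auto
      then have "Bad = {}" unfolding Bad_def R_def True by auto
      then show ?thesis by simp
    next
      case False
      then have s0: "\<sigma> > 0" using \<sigma>0 by simp
      have j0: "real j > 0" unfolding j_def using q1 by simp
      have "(\<Sum>y\<in>Bad. R^2) \<le> (\<Sum>y\<in>Bad. (real (happyH b h y) - M)^2)"
      proof (rule sum_mono)
        fix y assume "y \<in> Bad"
        then have "\<bar>R\<bar> \<le> \<bar>real (happyH b h y) - M\<bar>" unfolding Bad_def using R0 by auto
        then show "R^2 \<le> (real (happyH b h y) - M)^2" by (simp add: abs_le_square_iff)
      qed
      also have "\<dots> \<le> (\<Sum>y<B. (real (happyH b h y) - M)^2)"
        by (rule sum_mono2) (auto simp: Bad_def)
      finally have "real (card Bad) * (lam^2 * \<sigma>^2 * real j) \<le> real B * real j * \<sigma>^2"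
        unfolding mom R_def using j0 by (simp add: power_mult_distrib)
      then have "real (card Bad) * lam^2 \<le> real B" using s0 j0
        by (simp add: algebra_simps)
      then show ?thesis using assms(4) by (simp add: field_simps)
    qed
    have "card Good + card Bad = B"
    proof -
      have "Good \<union> Bad = {..<B}" "Good \<inter> Bad = {}" unfolding Good_def Bad_def by auto
      moreover have "finite Good" "finite Bad" unfolding Good_def Bad_def by simp_all
      ultimately have "card {..<B} = card Good + card Bad" using card_Un_disjoint[of Good Bad] by simp
      then show ?thesis by simp
    qed
    then have goodb: "real (card Good) \<ge> (1 - 1/lam^2) * real B"
      using badb by (simp add: algebra_simps)
    have finG: "finite Good" unfolding Good_def by simp
    define K where "K = {k. 1 \<le> k \<and> k \<le> q \<and> real a - M - R \<le> real k \<and> real k \<le> real c - M + R}"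
    have finK: "finite K" unfolding K_def by (rule finite_subset[of _ "{..q}"]) auto
    have inK: "happyH b h y < t \<and> t - happyH b h y \<in> K" if "y \<in> Good" "t \<in> T" for y t
    proof -
      have hy: "M - R \<le> real (happyH b h y)" "real (happyH b h y) \<le> M + R"
        using that(1) unfolding Good_def by auto
      have tI: "t \<in> I" using that(2) unfolding T_def by simp
      have "a \<le> t" "t \<le> c" using tI ac by auto
      then have at: "real a \<le> real t" "real t \<le> real c" by simp_all
      have lt: "happyH b h y < t" using Jt[OF tI] hy by linarith
      have "real (t - happyH b h y) = real t - real (happyH b h y)" using lt by (simp add: of_nat_diff)
      then show ?thesis using lt Jt[OF tI] hy at unfolding K_def by auto
    qed
    have cardT: "card {k\<in>K. k + happyH b h y \<in> T} = card T" if "y \<in> Good" for y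
    proof -
      have "(\<lambda>k. k + happyH b h y) ` {k\<in>K. k + happyH b h y \<in> T} = T"
      proof
        show "(\<lambda>k. k + happyH b h y) ` {k\<in>K. k + happyH b h y \<in> T} \<subseteq> T" by auto
        show "T \<subseteq> (\<lambda>k. k + happyH b h y) ` {k\<in>K. k + happyH b h y \<in> T}"
        proof
          fix t assume "t \<in> T"
          with inK[OF that this] show "t \<in> (\<lambda>k. k + happyH b h y) ` {k\<in>K. k + happyH b h y \<in> T}"
            by (intro image_eqI[of _ _ "t - happyH b h y"]) auto
        qed
      qed
      moreover have "inj_on (\<lambda>k. k + happyH b h y) {k\<in>K. k + happyH b h y \<in> T}" by (rule inj_onI) simp
      ultimately show ?thesis using card_image by metis
    qed
    have cnt_ge: "card {y\<in>Good. k + happyH b h y \<in> T} \<le> cnt k" for k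
    proof -
      have "(\<lambda>y. xk k * B + y) ` {y\<in>Good. k + happyH b h y \<in> T} \<subseteq> {m\<in>I2 k. typeC b h C m}"
      proof
        fix m assume "m \<in> (\<lambda>y. xk k * B + y) ` {y\<in>Good. k + happyH b h y \<in> T}"
        then obtain y where y: "y \<in> Good" "k + happyH b h y \<in> T" "m = xk k * B + y" by auto
        have yB: "y < B" using y(1) unfolding Good_def by simp
        have "typeC b h C (happyH b h m)" using y(2,3) Hxk[OF yB] unfolding T_def by simp
        then have "typeC b h C m" by (rule typeC_H)
        moreover have "m \<in> I2 k" unfolding I2_def y(3) using yB by auto
        ultimately show "m \<in> {m\<in>I2 k. typeC b h C m}" by simp
      qed
      moreover have "finite {m\<in>I2 k. typeC b h C m}" unfolding I2_def by simp
      ultimately have "card ((\<lambda>y. xk k * B + y) ` {y\<in>Good. k + happyH b h y \<in> T}) \<le> cnt k"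
        unfolding cnt_def by (rule card_mono[rotated])
      moreover have "inj_on (\<lambda>y. xk k * B + y) {y\<in>Good. k + happyH b h y \<in> T}" by (rule inj_onI) simp
      ultimately show ?thesis by (simp add: card_image)
    qed
    have sumK: "card Good * card T \<le> (\<Sum>k\<in>K. cnt k)"
    proof -
      have "card Good * card T = (\<Sum>y\<in>Good. card {k\<in>K. k + happyH b h y \<in> T})"
        using cardT by simp
      also have "\<dots> = (\<Sum>k\<in>K. card {y\<in>Good. k + happyH b h y \<in> T})"
        by (rule double_count[symmetric, OF finK finG])
      also have "\<dots> \<le> (\<Sum>k\<in>K. cnt k)" by (rule sum_mono) (rule cnt_ge)
      finally show ?thesis .
    qed
    have Gne: "Good \<noteq> {}"
    proof
      assume "Good = {}"
      then have "(1 - 1/lam^2) * real B \<le> 0" using goodb by simp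
      moreover have "1/lam^2 < 1" using lam1 by (simp add: field_simps)
      ultimately show False using B1 by (simp add: mult_le_0_iff)
    qed
    have Kne: "K \<noteq> {}" using Gne Tne inK by blast
    have Kb: "real (card K) \<le> real (card I) + 2*R"
    proof -
      have "real (card K) \<le> (real c - M + R) - (real a - M - R) + 1"
        by (rule card_real_bound[OF finK Kne]) (auto simp: K_def)
      then show ?thesis using cardI by simp
    qed
    have K0: "real (card K) > 0" using finK Kne by (simp add: card_gt_0_iff)
    obtain k where kK: "k \<in> K" and kc: "card Good * card T \<le> cnt k * card K"
    proof (rule ccontr)
      assume "\<not> thesis"
      then have lt: "\<forall>k\<in>K. cnt k * card K < card Good * card T" using that by force
      have "(\<Sum>k\<in>K. cnt k * card K) < (\<Sum>k\<in>K. card Good * card T)"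
        by (rule sum_strict_mono[OF finK Kne]) (use lt in auto)
      then have "card K * (\<Sum>k\<in>K. cnt k) < card K * (card Good * card T)"
        by (simp add: sum_distrib_left[symmetric] mult.commute)
      then show False using sumK by (meson mult_le_mono2 not_less)
    qed
    have k1: "1 \<le> k" "k \<le> q" using kK unfolding K_def by auto
    have kcr: "real (card Good) * real (card T) \<le> real (cnt k) * real (card K)"
      using kc by (metis of_nat_le_iff of_nat_mult)
    have Bpos: "real B > 0" using B1 by simp
    have IR: "real (card I) + 2*R > 0" using cardI0 R0 by simp
    have "target \<le> (real (card Good) / real B) * real (card T) / (real (card I) + 2*R)"
    proof -
      have "(1 - 1/lam^2) \<le> real (card Good) / real B" using goodb Bpos by (simp add: field_simps)
      then have "(1 - 1/lam^2) * real (card T) \<le> (real (card Good) / real B) * real (card T)"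
        by (rule mult_right_mono) simp
      then have "(1 - 1/lam^2) * real (card T) / (real (card I) + 2*R) \<le> (real (card Good) / real B) * real (card T) / (real (card I) + 2*R)"
        using IR by (rule divide_right_mono[OF _ less_imp_le])
      then show ?thesis unfolding target_eq .
    qed
    also have "\<dots> \<le> (real (card Good) / real B) * real (card T) / real (card K)"
      by (rule divide_left_mono[OF Kb]) (use K0 Bpos IR in auto)
    also have "\<dots> \<le> real (cnt k) / real B"
      using kcr K0 Bpos by (simp add: field_simps)
    finally have "target \<le> typeC_density b h C (I2 k)" using strict(2)[OF k1] by simp
    then show ?thesis using strict(1)[OF k1] unfolding target_def by blast
  qed
qed

end
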